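(* Let $G=(V,E)$ be a graph. For every $v\in V$ the relation $\prec_v$ on $V$ is a strict weak order, i.e., it is irreflexive and transitive and incomparability with respect to $\prec_v$ is transitive.
   Context: Graphs are finite, simple, undirected, with nonempty vertex set. A module of $G=(V,E)$ is a nonempty $M\subseteq V$ such that every $u\in V\setminus M$ is adjacent either to all or to none of the vertices of $M$. For $v,w\in V$, $M_{v,w}$ is the intersection of all modules of $G$ containing both $v$ and $w$. For $v\in V$, the relation $\prec_v$ on $V$ is defined by $w_1\prec_v w_2$ iff $M_{v,w_2}\subsetneq M_{v,w_1}$. Elements $a,b$ are incomparable w.r.t. $\prec_v$ if neither $a\prec_v b$ nor $b\prec_v a$. *)

theory Defs
  imports Main
begin

definition graph :: "'a set \<Rightarrow> ('a \<Rightarrow> 'a \<Rightarrow> bool) \<Rightarrow> bool" where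
  "graph V E \<longleftrightarrow> finite V \<and> V \<noteq> {} \<and>
     (\<forall>u v. E u v \<longrightarrow> u \<in> V \<and> v \<in> V) \<and>
     (\<forall>u v. E u v \<longrightarrow> E v u) \<and> (\<forall>v. \<not> E v v)"

definition is_module :: "'a set \<Rightarrow> ('a \<Rightarrow> 'a \<Rightarrow> bool) \<Rightarrow> 'a set \<Rightarrow> bool" where
  "is_module V E M \<longleftrightarrow> M \<noteq> {} \<and> M \<subseteq> V \<and>
     (\<forall>u \<in> V - M. (\<forall>x \<in> M. E u x) \<or> (\<forall>x \<in> M. \<not> E u x))"

definition Mvw :: "'a set \<Rightarrow> ('a \<Rightarrow> 'a \<Rightarrow> bool) \<Rightarrow> 'a \<Rightarrow> 'a \<Rightarrow> 'a set" where
  "Mvw V E v w = \<Inter> {M. is_module V E M \<and> v \<in> M \<and> w \<in> M}"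

definition prec_v :: "'a set \<Rightarrow> ('a \<Rightarrow> 'a \<Rightarrow> bool) \<Rightarrow> 'a \<Rightarrow> 'a \<Rightarrow> 'a \<Rightarrow> bool" where
  "prec_v V E v w1 w2 \<longleftrightarrow> w1 \<in> V \<and> w2 \<in> V \<and> Mvw V E v w2 \<subset> Mvw V E v w1"

definition incomparable_v :: "'a set \<Rightarrow> ('a \<Rightarrow> 'a \<Rightarrow> bool) \<Rightarrow> 'a \<Rightarrow> 'a \<Rightarrow> 'a \<Rightarrow> bool" where
  "incomparable_v V E v a b \<longleftrightarrow> \<not> prec_v V E v a b \<and> \<not> prec_v V E v b a"

end

theory Submission
  imports Defs
begin

lemma mod_alt: "is_module V E M \<longleftrightarrow> M \<noteq> {} \<and> M \<subseteq> V \<and>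
   (\<forall>u \<in> V - M. \<forall>x \<in> M. \<forall>y \<in> M. E u x = E u y)"
  unfolding is_module_def by blast

lemma modD: "is_module V E M \<Longrightarrow> u \<in> V \<Longrightarrow> u \<notin> M \<Longrightarrow> x \<in> M \<Longrightarrow> y \<in> M \<Longrightarrow> E u x = E u y"
  unfolding mod_alt by blast

lemma Mvw_module:
  assumes "V \<noteq> {}" "v \<in> V" "w \<in> V"
  shows "is_module V E (Mvw V E v w)" "v \<in> Mvw V E v w" "w \<in> Mvw V E v w"
proof -
  have V: "is_module V E V" using assms unfolding is_module_def by blast
  let ?F = "{M. is_module V E M \<and> v \<in> M \<and> w \<in> M}"
  have VF: "V \<in> ?F" using V assms by blast
  show "v \<in> Mvw V E v w" "w \<in> Mvw V E v w" unfolding Mvw_def by auto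
  have sub: "Mvw V E v w \<subseteq> V" unfolding Mvw_def using VF by blast
  show "is_module V E (Mvw V E v w)"
    unfolding mod_alt
  proof (intro conjI ballI)
    show "Mvw V E v w \<noteq> {}" using \<open>v \<in> Mvw V E v w\<close> by blast
    show "Mvw V E v w \<subseteq> V" by (rule sub)
    fix u x y assume u: "u \<in> V - Mvw V E v w" and x: "x \<in> Mvw V E v w" and y: "y \<in> Mvw V E v w"
    then obtain M where M: "M \<in> ?F" "u \<notin> M" unfolding Mvw_def by blast
    have "x \<in> M" "y \<in> M" using x y M unfolding Mvw_def by blast+
    then show "E u x = E u y" using modD[of V E M u x y] M u by blast
  qed
qed

lemma Mvw_min: "is_module V E M \<Longrightarrow> v \<in> M \<Longrightarrow> w \<in> M \<Longrightarrow> Mvw V E v w \<subseteq> M"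
  unfolding Mvw_def by blast

lemma core:
  assumes symE: "\<And>x y. E x y = E y x"
    and A: "is_module V E A" and B: "is_module V E B" and C: "is_module V E C"
    and vA: "v \<in> A" and vB: "v \<in> B" and vC: "v \<in> C"
    and aA: "a \<in> A" and bB: "b \<in> B" and cC: "c \<in> C"
    and AC: "A \<subseteq> C" and aB: "a \<notin> B" and bC: "b \<notin> C" and cA: "c \<notin> A"
    and minB: "\<And>M. is_module V E M \<Longrightarrow> v \<in> M \<Longrightarrow> b \<in> M \<Longrightarrow> B \<subseteq> M"
    and minC: "\<And>M. is_module V E M \<Longrightarrow> v \<in> M \<Longrightarrow> c \<in> M \<Longrightarrow> C \<subseteq> M"
  shows False
proof -
  have AV: "A \<subseteq> V" and BV: "B \<subseteq> V" and CV: "C \<subseteq> V" using A B C unfolding is_module_def by auto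
  let ?N = "(B - C) \<union> (A \<inter> B)"
  have N: "is_module V E ?N"
    unfolding mod_alt
  proof (intro conjI ballI)
    show "?N \<noteq> {}" using vA vB by blast
    show "?N \<subseteq> V" using BV by blast
    fix u x y assume u: "u \<in> V - ?N" and x: "x \<in> ?N" and y: "y \<in> ?N"
    show "E u x = E u y"
    proof (cases "u \<in> B")
      case False
      then show ?thesis using modD[OF B, of u x y] u x y by blast
    next
      case True
      then have uC: "u \<in> C" and uA: "u \<notin> A" using u by auto
      have key: "E u z = E u a" if z: "z \<in> ?N" for z
      proof (cases "z \<in> A")
        case True
        then show ?thesis using modD[OF A, of u z a] uA u aA by blast
      next
        case False
        then have zB: "z \<in> B" "z \<notin> C" using z by auto
        have "E z u = E z a" using modD[OF C, of z u a] zB z uC aA AC BV by blast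
        moreover have "E a z = E a u" using modD[OF B, of a z u] zB True aB aA AV by blast
        ultimately show ?thesis using symE by metis
      qed
      show ?thesis using key[OF x] key[OF y] by simp
    qed
  qed
  have BN: "B \<subseteq> ?N" using minB[OF N] vA vB bB bC by blast
  hence BCA: "B \<inter> C \<subseteq> A" by blast
  let ?S = "(C - A) \<union> (A \<inter> B)"
  have S: "is_module V E ?S"
    unfolding mod_alt
  proof (intro conjI ballI)
    show "?S \<noteq> {}" using vA vB by blast
    show "?S \<subseteq> V" using CV AV by blast
    fix u x y assume u: "u \<in> V - ?S" and x: "x \<in> ?S" and y: "y \<in> ?S"
    show "E u x = E u y"
    proof (cases "u \<in> C")
      case False
      then show ?thesis using modD[OF C, of u x y] u x y AC by blast
    next
      case True
      then have uA: "u \<in> A" and uB: "u \<notin> B" using u by auto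
      have key: "E u z = E u b" if z: "z \<in> ?S" for z
      proof (cases "z \<in> B")
        case True
        then show ?thesis using modD[OF B, of u z b] uB u bB by blast
      next
        case False
        then have zC: "z \<in> C" "z \<notin> A" using z by auto
        have "E z u = E z v" using modD[OF A, of z u v] zC uA vA CV by blast
        moreover have "E z v = E z b" using modD[OF B, of z v b] zC False vB bB CV by blast
        moreover have "E b z = E b u" using modD[OF C, of b z u] zC True bC bB BV by blast
        ultimately show ?thesis using symE by metis
      qed
      show ?thesis using key[OF x] key[OF y] by simp
    qed
  qed
  have "C \<subseteq> ?S" using minC[OF S] vA vB cC cA by blast
  then show False using aA AC aB by blast
qed

theorem lemma3p13:
  assumes "graph V E" and "v \<in> V"
  shows "(\<forall>w \<in> V. \<not> prec_v V E v w w)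
       \<and> (\<forall>a \<in> V. \<forall>b \<in> V. \<forall>c \<in> V.
            prec_v V E v a b \<longrightarrow> prec_v V E v b c \<longrightarrow> prec_v V E v a c)
       \<and> (\<forall>a \<in> V. \<forall>b \<in> V. \<forall>c \<in> V.
            incomparable_v V E v a b \<longrightarrow> incomparable_v V E v b c \<longrightarrow> incomparable_v V E v a c)"
proof -
  have Vne: "V \<noteq> {}" and symE: "\<And>x y. E x y = E y x"
    using assms(1) unfolding graph_def by blast+
  have half: False if a: "a \<in> V" and b: "b \<in> V" and c: "c \<in> V"
    and ab: "incomparable_v V E v a b" and bc: "incomparable_v V E v b c"
    and ac: "Mvw V E v a \<subset> Mvw V E v c" for a b c
  proof -
    let ?A = "Mvw V E v a" and ?B = "Mvw V E v b" and ?C = "Mvw V E v c"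
    note mA = Mvw_module[OF Vne assms(2) a, of E]
    note mB = Mvw_module[OF Vne assms(2) b, of E]
    note mC = Mvw_module[OF Vne assms(2) c, of E]
    have cA: "c \<notin> ?A" using Mvw_min[OF mA(1) mA(2), of c] ac by blast
    have AB: "?A \<noteq> ?B" using ac bc b c unfolding incomparable_v_def prec_v_def by auto
    have aB: "a \<notin> ?B"
    proof
      assume "a \<in> ?B"
      then have "?A \<subseteq> ?B" using Mvw_min[OF mB(1) mB(2)] by blast
      then show False using AB ab a b unfolding incomparable_v_def prec_v_def by auto
    qed
    have BC: "?B \<noteq> ?C" using ac ab a b unfolding incomparable_v_def prec_v_def by auto
    have bC: "b \<notin> ?C"
    proof
      assume "b \<in> ?C"
      then have "?B \<subseteq> ?C" using Mvw_min[OF mC(1) mC(2)] by blast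
      then show False using BC bc c b unfolding incomparable_v_def prec_v_def by auto
    qed
    show False
      by (rule core[OF symE mA(1) mB(1) mC(1) mA(2) mB(2) mC(2) mA(3) mB(3) mC(3)
            _ aB bC cA Mvw_min Mvw_min]) (use ac in auto)
  qed
  show ?thesis
  proof (intro conjI ballI impI)
    fix w assume "w \<in> V" then show "\<not> prec_v V E v w w" unfolding prec_v_def by blast
  next
    fix a b c assume "a \<in> V" "b \<in> V" "c \<in> V" "prec_v V E v a b" "prec_v V E v b c"
    then show "prec_v V E v a c" unfolding prec_v_def by blast
  next
    fix a b c assume abc: "a \<in> V" "b \<in> V" "c \<in> V" and
      ab: "incomparable_v V E v a b" and bc: "incomparable_v V E v b c"
    have ba: "incomparable_v V E v b a" and cb: "incomparable_v V E v c b"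
      using ab bc unfolding incomparable_v_def by auto
    show "incomparable_v V E v a c"
      unfolding incomparable_v_def prec_v_def
      using half[OF abc ab bc] half[OF abc(3,2,1) cb ba] by blast
  qed
qed

end
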